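(* Let $\beta>1$. For all $x,y\in\mathbb R$, $\Theta_1(x,y)\ge\Theta_2(x,y)$.
   Context: For $\beta>1$ and real $x\ne y$ define $\Theta_1(x,y)=\Big(\frac1{2\beta-1}\frac{x|x|^{2(\beta-1)}-y|y|^{2(\beta-1)}}{x-y}\Big)^{\frac1{2(\beta-1)}}$ and $\Theta_2(x,y)=\Big(\frac1\beta\frac{x|x|^{\beta-1}-y|y|^{\beta-1}}{x-y}\Big)^{\frac1{\beta-1}}$ (the quotients are positive since both numerator maps are strictly increasing), and $\Theta_1(x,x)=\Theta_2(x,x)=0$. These are the absolute values of mean-value points for $t\mapsto t|t|^{2(\beta-1)}$ and $t\mapsto t|t|^{\beta-1}$ on $[x,y]$. *)

theory Defs
  imports "HOL-Analysis.Analysis"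
begin

definition Theta1 :: "real \<Rightarrow> real \<Rightarrow> real \<Rightarrow> real" where
  "Theta1 \<beta> x y = (if x = y then 0 else
     ((1 / (2*\<beta> - 1)) * ((x * \<bar>x\<bar> powr (2*(\<beta> - 1)) - y * \<bar>y\<bar> powr (2*(\<beta> - 1))) / (x - y)))
       powr (1 / (2*(\<beta> - 1))))"

definition Theta2 :: "real \<Rightarrow> real \<Rightarrow> real \<Rightarrow> real" where
  "Theta2 \<beta> x y = (if x = y then 0 else
     ((1 / \<beta>) * ((x * \<bar>x\<bar> powr (\<beta> - 1) - y * \<bar>y\<bar> powr (\<beta> - 1)) / (x - y)))
       powr (1 / (\<beta> - 1)))"

end

theory Submission
  imports Defs
begin

lemma deriv_h: assumes "a>0" "t\<noteq>(0::real)"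
  shows "((\<lambda>t. t * \<bar>t\<bar> powr a) has_real_derivative (a+1) * \<bar>t\<bar> powr a) (at t)"
proof (cases "t > 0")
  case True
  have ev: "eventually (\<lambda>s. s * \<bar>s\<bar> powr a = s powr (a+1)) (nhds t)"
  proof -
    have "eventually (\<lambda>s. s \<in> {0<..}) (nhds t)" using True by (intro eventually_nhds_in_open) auto
    then show ?thesis by (rule eventually_mono) (auto simp: powr_add)
  qed
  have "((\<lambda>s. s powr (a+1)) has_real_derivative (a+1) * t powr a) (at t)"
    using True by (auto intro!: derivative_eq_intros)
  then show ?thesis using DERIV_cong_ev[OF refl ev refl] True by simp
next
  case False
  then have tn: "t < 0" using assms by simp
  have ev: "eventually (\<lambda>s. s * \<bar>s\<bar> powr a = - ((-s) powr (a+1))) (nhds t)"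
  proof -
    have "eventually (\<lambda>s. s \<in> {..<0}) (nhds t)" using tn by (intro eventually_nhds_in_open) auto
    then show ?thesis by (rule eventually_mono) (auto simp: powr_add)
  qed
  have "((\<lambda>s. - ((-s) powr (a+1))) has_real_derivative - ((a+1) * (-t) powr (a+1 - 1) * (-1))) (at t)"
    using tn by (auto intro!: derivative_eq_intros)
  then show ?thesis using DERIV_cong_ev[OF refl ev refl] tn by simp
qed
lemma cont_h: assumes "a>0" shows "continuous_on S (\<lambda>t::real. t * \<bar>t\<bar> powr a)"
  using assms by (auto intro!: continuous_intros continuous_on_powr')

lemma int_h: assumes "a>0" "x \<le> (y::real)"
  shows "((\<lambda>t. \<bar>t\<bar> powr a) has_integral (y * \<bar>y\<bar> powr a - x * \<bar>x\<bar> powr a) / (a+1)) {x..y}"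
proof -
  have "((\<lambda>t. (a+1) * \<bar>t\<bar> powr a) has_integral (y * \<bar>y\<bar> powr a - x * \<bar>x\<bar> powr a)) {x..y}"
    apply (rule fundamental_theorem_of_calculus_interior_strong[where S="{0}"])
    using assms by (auto intro!: cont_h deriv_h simp: has_real_derivative_iff_has_vector_derivative[symmetric])
  from has_integral_cmult_real[OF this, of "1/(a+1)"] show ?thesis using assms
    by simp
qed

lemma main: assumes q: "q>0" and xy: "x < (y::real)"
  defines "A1 \<equiv> (1 / (2*q+1)) * ((x * \<bar>x\<bar> powr (2*q) - y * \<bar>y\<bar> powr (2*q)) / (x - y))"
  and "A2 \<equiv> (1 / (q+1)) * ((x * \<bar>x\<bar> powr q - y * \<bar>y\<bar> powr q) / (x - y))"
  shows "A2 powr (1/q) \<le> A1 powr (1/(2*q))"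
proof -
  define I1 where "I1 = (y * \<bar>y\<bar> powr (2*q) - x * \<bar>x\<bar> powr (2*q)) / (2*q+1)"
  define I2 where "I2 = (y * \<bar>y\<bar> powr q - x * \<bar>x\<bar> powr q) / (q+1)"
  have i1: "((\<lambda>t. \<bar>t\<bar> powr (2*q)) has_integral I1) {x..y}"
    unfolding I1_def using int_h[of "2*q" x y] q xy by simp
  have i2: "((\<lambda>t. \<bar>t\<bar> powr q) has_integral I2) {x..y}"
    unfolding I2_def using int_h[of "q" x y] q xy by simp
  have sw: "(X - Y) / (x - y) = (Y - X) / (y - x)" for X Y :: real
    by (metis minus_diff_eq minus_divide_divide)
  have A1: "A1 = I1 / (y - x)" unfolding A1_def I1_def sw by simp
  have A2: "A2 = I2 / (y - x)" unfolding A2_def I2_def sw by simp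
  have I2nn: "I2 \<ge> 0" using has_integral_nonneg[OF i2] by simp
  define c where "c = I2 / (y - x)"
  have sq: "(\<bar>t\<bar> powr q - c)^2 = \<bar>t\<bar> powr (2*q) - 2*c*\<bar>t\<bar> powr q + c^2" for t
  proof -
    have "\<bar>t\<bar> powr (2*q) = \<bar>t\<bar> powr q * \<bar>t\<bar> powr q"
      by (metis mult_2 powr_add)
    then show ?thesis by (simp add: power2_eq_square algebra_simps)
  qed
  have "((\<lambda>t. \<bar>t\<bar> powr (2*q) - 2*c*\<bar>t\<bar> powr q + c^2) has_integral (I1 - 2*c*I2 + c^2 * (y-x))) {x..y}"
    using has_integral_add[OF has_integral_diff[OF i1 has_integral_cmult_real[OF i2, of "2*c"]] has_integral_const_real[of "c^2" x y]] xy
    by (simp add: mult.commute)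
  then have "((\<lambda>t. (\<bar>t\<bar> powr q - c)^2) has_integral (I1 - 2*c*I2 + c^2 * (y-x))) {x..y}"
    by (simp add: sq)
  then have "0 \<le> I1 - 2*c*I2 + c^2 * (y-x)" by (rule has_integral_nonneg) simp
  moreover have cd: "c * (y - x) = I2" unfolding c_def using xy by simp
  ultimately have "c^2 * (y - x) \<le> I1" by (simp add: power2_eq_square algebra_simps)
  then have "A2^2 \<le> A1" unfolding A1 A2 c_def[symmetric] using xy
    by (simp add: pos_le_divide_eq)
  have A2nn: "A2 \<ge> 0" using A2 I2nn xy by simp
  have "A2 powr (1/q) = (A2 powr 2) powr (1/(2*q))" using q by (simp add: powr_powr)
  also have "\<dots> = (A2^2) powr (1/(2*q))" using A2nn by (simp add: powr_numeral)
  also have "\<dots> \<le> A1 powr (1/(2*q))" using \<open>A2^2 \<le> A1\<close> q by (intro powr_mono2) auto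
  finally show ?thesis .
qed

lemma lt_case: assumes "\<beta> > 1" "x < (y::real)" shows "Theta1 \<beta> x y \<ge> Theta2 \<beta> x y"
proof -
  have q: "\<beta> - 1 > 0" using assms by simp
  have e1: "2*\<beta> - 1 = 2*(\<beta>-1) + 1" "\<beta> = (\<beta>-1)+1" by simp_all
  show ?thesis using main[OF q assms(2)] assms(2)
    unfolding Theta1_def Theta2_def by (simp add: e1[symmetric])
qed

lemma sym1: "Theta1 b x y = Theta1 b y x"
  unfolding Theta1_def by (metis minus_diff_eq minus_divide_divide)
lemma sym2: "Theta2 b x y = Theta2 b y x"
  unfolding Theta2_def by (metis minus_diff_eq minus_divide_divide)

theorem lemma4p4:
  fixes \<beta> x y :: real
  assumes "\<beta> > 1"
  shows "Theta1 \<beta> x y \<ge> Theta2 \<beta> x y"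
proof (cases x y rule: linorder_cases)
  case less then show ?thesis using lt_case assms by blast
next
  case equal then show ?thesis by (simp add: Theta1_def Theta2_def)
next
  case greater then show ?thesis using lt_case[OF assms greater] by (simp add: sym1 sym2)
qed

end
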